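(* Let $\phi:[0,\infty)\to[0,\infty)$ be an increasing bijection such that $\sum_{k=1}^\infty\frac{1}{1\vee\log(\phi^{-1}(k))}=\infty$. Then there exist an increasing bijection $\psi:[0,\infty)\to[0,\infty)$ with $\psi(x)\leq\phi(x)$ and $\psi(x)\leq\sqrt{x}$ for every $x\geq0$, and a strictly increasing function $a:\mathbb{N}\to\mathbb{N}$ satisfying \[ \lim_{k\to\infty}\big(a(k)-a(k-1)\big)=+\infty \qquad\text{and}\qquad \sum_{k=1}^\infty\frac{1}{1\vee\log(\psi^{-1}(a(k)))}=\infty, \] such that every sequence $(z_n)_{n\geq0}$ of positive reals satisfying $\limsup_{n\to\infty}e^{\phi(n)}z_n<\infty$ satisfies \[ \liminf_{k\to\infty}\frac1k\#\{1\leq r\leq k: z\text{ is }\psi\text{-good on scale }a(r)\}\geq\frac12 . \]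
   Context: For a positive sequence $z=(z_n)_{n\geq0}$ with $z_n\to0$, let $z_n^*=\min_{0\leq m\leq n}z_m$ and $k_0=\lceil 2\log z_0^{-1}\rceil$. For $k\geq k_0$ let $D_k=(\{z_m^*:m\geq1\}\cap[e^{-k-1},e^{-k}])\cup\{e^{-k},e^{-k-1}\}$, $N_k=|D_k|-1$, and list the elements of $D_k$ in decreasing order as $e^{-k}=d_{0,k}>d_{1,k}>\dots>d_{N_k,k}=e^{-k-1}$. For an increasing function $\psi$, write $\psi^{-1}(x)=\min\{y\geq0:\psi(y)\geq x\}$. For $k\geq k_0$, $z$ is $\psi$-good on scale $k$ if \[ \prod\Big\{\tfrac{d_{i+1,k}}{d_{i,k}}:0\leq i<N_k,\ \tfrac{d_{i+1,k}}{d_{i,k}}\leq\exp\big[-\tfrac{k}{2\psi^{-1}(k)}\big]\Big\}\leq e^{-1/2}. \] (Goodness is only defined for scales $k\geq k_0$; the finitely many scales $a(r)<k_0$ do not affect the $\liminf$.) $\phi^{-1}$ is the inverse of $\phi$. *)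

theory Defs
  imports "HOL-Analysis.Analysis"
begin

definition inc_bij :: "(real \<Rightarrow> real) \<Rightarrow> bool" where
  "inc_bij f \<longleftrightarrow> mono_on {0..} f \<and> bij_betw f {0..} {0..}"

definition ginv :: "(real \<Rightarrow> real) \<Rightarrow> real \<Rightarrow> real" where
  "ginv f x = (LEAST y::real. 0 \<le> y \<and> x \<le> f y)"

definition zstar :: "(nat \<Rightarrow> real) \<Rightarrow> nat \<Rightarrow> real" where
  "zstar z n = Min {z m | m. m \<le> n}"

definition kzero :: "(nat \<Rightarrow> real) \<Rightarrow> int" where
  "kzero z = \<lceil>2 * ln (1 / z 0)\<rceil>"

definition Dset :: "(nat \<Rightarrow> real) \<Rightarrow> nat \<Rightarrow> real set" where
  "Dset z k = ({zstar z m | m. m \<ge> 1} \<inter> {exp (- real k - 1) .. exp (- real k)})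
              \<union> {exp (- real k), exp (- real k - 1)}"

definition dlist :: "(nat \<Rightarrow> real) \<Rightarrow> nat \<Rightarrow> real list" where
  "dlist z k = rev (sorted_list_of_set (Dset z k))"

definition Nk :: "(nat \<Rightarrow> real) \<Rightarrow> nat \<Rightarrow> nat" where
  "Nk z k = card (Dset z k) - 1"

text \<open>z is psi-good on scale k (only defined for k \<ge> k_0).\<close>
definition good :: "(real \<Rightarrow> real) \<Rightarrow> (nat \<Rightarrow> real) \<Rightarrow> nat \<Rightarrow> bool" where
  "good \<psi> z k \<longleftrightarrow> int k \<ge> kzero z \<and>
     (let d = dlist z k;
          thr = exp (- (real k / (2 * ginv \<psi> (real k))))
      in (\<Prod>i\<in>{i. i < Nk z k \<and> d ! (i+1) / d ! i \<le> thr}. d ! (i+1) / d ! i) \<le> exp (- 1 / 2))"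

end

theory Submission
  imports Defs
begin


lemma prod_core:
  fixes d :: "real list" and N :: nat and t :: real
  assumes len: "length d = Suc N" and pos: "\<forall>i<Suc N. d!i > 0" and t0: "0<t" and t1: "t\<le>1"
  shows "(\<Prod>i\<in>{i. i<N \<and> d!(i+1)/d!i \<le> t}. d!(i+1)/d!i) \<le> (d!N/d!0) / t^N"
proof -
  define r where "r i = d!(i+1)/d!i" for i
  have tele: "n \<le> N \<Longrightarrow> (\<Prod>i<n. r i) = d!n/d!0" for n
  proof (induction n)
    case 0 then show ?case using pos[rule_format, of 0] by simp
  next
    case (Suc n)
    have "d!n > 0" using Suc pos by auto
    then show ?case using Suc by (simp add: r_def)
  qed
  define I where "I = {i. i<N \<and> r i \<le> t}"
  have IN: "I \<subseteq> {..<N}" by (auto simp: I_def)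
  have rpos: "i < N \<Longrightarrow> r i > 0" for i using pos by (simp add: r_def)
  have split: "(\<Prod>i<N. r i) = (\<Prod>i\<in>{..<N} - I. r i) * (\<Prod>i\<in>I. r i)"
    by (rule prod.subset_diff[OF IN]) simp
  have "(\<Prod>i\<in>{..<N} - I. t) \<le> (\<Prod>i\<in>{..<N} - I. r i)"
    by (rule prod_mono) (auto simp: I_def t0 less_imp_le)
  hence E1: "t ^ card ({..<N} - I) \<le> (\<Prod>i\<in>{..<N} - I. r i)" by simp
  have "card ({..<N} - I) \<le> N" by (metis card_Diff_subset card_lessThan diff_le_self finite_lessThan finite_subset IN)
  hence "t ^ N \<le> t ^ card ({..<N} - I)" using t0 t1 by (simp add: power_decreasing)
  with E1 have E: "t^N \<le> (\<Prod>i\<in>{..<N} - I. r i)" by linarith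
  have tN: "t^N > 0" using t0 by simp
  have PI: "(\<Prod>i\<in>I. r i) \<ge> 0" by (rule prod_nonneg) (auto simp: I_def rpos less_imp_le)
  have "(\<Prod>i\<in>I. r i) * t^N \<le> (\<Prod>i\<in>I. r i) * (\<Prod>i\<in>{..<N} - I. r i)"
    using E PI by (simp add: mult_left_mono)
  also have "\<dots> = d!N/d!0" using split tele[of N] by simp
  finally have "(\<Prod>i\<in>I. r i) \<le> (d!N/d!0) / t^N" using tN by (subst pos_le_divide_eq) auto
  then show ?thesis by (simp add: I_def r_def)
qed


lemma dlist_facts:
  fixes D :: "real set"
  assumes fin: "finite D" and lo: "lo \<in> D" and hi: "hi \<in> D" and lop: "lo > 0"
    and rng: "\<And>x. x \<in> D \<Longrightarrow> lo \<le> x \<and> x \<le> hi"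
  defines "d \<equiv> rev (sorted_list_of_set D)"
  shows "length d = Suc (card D - 1)" "\<forall>i<Suc (card D - 1). d!i > 0"
    "d!0 = hi" "d!(card D - 1) = lo"
proof -
  define s where "s = sorted_list_of_set D"
  have cD: "card D \<ge> 1" using fin lo by (metis One_nat_def Suc_leI card_gt_0_iff empty_iff)
  have ls: "length s = card D" using fin by (simp add: s_def length_sorted_list_of_set)
  have ss: "sorted s" by (simp add: s_def sorted_sorted_list_of_set)
  have sD: "set s = D" using fin by (simp add: s_def set_sorted_list_of_set)
  show l: "length d = Suc (card D - 1)" using ls cD by (simp add: d_def s_def[symmetric])
  have mem: "j < length s \<Longrightarrow> s!j \<in> D" for j using sD nth_mem by blast
  show "\<forall>i<Suc (card D - 1). d!i > 0"
  proof (intro allI impI)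
    fix i assume "i < Suc (card D - 1)"
    hence "d!i \<in> D" using l sD by (metis d_def s_def nth_mem set_rev)
    thus "d!i > 0" using rng lop by force
  qed
  obtain j where j: "j < length s" "s!j = lo" using lo sD by (metis in_set_conv_nth)
  obtain j' where j': "j' < length s" "s!j' = hi" using hi sD by (metis in_set_conv_nth)
  have s0: "s!0 = lo"
  proof -
    have "s!0 \<le> s!j" using ss j(1) by (simp add: sorted_nth_mono)
    moreover have "s!0 \<ge> lo" using rng mem[of 0] j(1) by (metis gr_zeroI not_less0)
    ultimately show ?thesis using j by simp
  qed
  have sl: "s!(card D - 1) = hi"
  proof -
    have "s!j' \<le> s!(card D - 1)" using ss j'(1) ls cD by (simp add: sorted_nth_mono)
    moreover have "s!(card D - 1) \<le> hi" using rng mem[of "card D - 1"] ls cD by auto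
    ultimately show ?thesis using j' by simp
  qed
  show "d!0 = hi" using sl ls cD by (simp add: d_def s_def[symmetric] rev_nth)
  show "d!(card D - 1) = lo" using s0 ls cD by (simp add: d_def s_def[symmetric] rev_nth)
qed

lemma inc_bijD:
  assumes "inc_bij f"
  shows "\<And>x. 0 \<le> x \<Longrightarrow> f x \<ge> 0"
    and "\<And>x y. 0 \<le> x \<Longrightarrow> x < y \<Longrightarrow> f x < f y"
    and "\<And>y. 0 \<le> y \<Longrightarrow> \<exists>x\<ge>0. f x = y"
proof -
  have m: "mono_on {0..} f" and b: "bij_betw f {0..} {0..}" using assms by (auto simp: inc_bij_def)
  show "\<And>x. 0 \<le> x \<Longrightarrow> f x \<ge> 0" using b by (auto simp: bij_betw_def)
  show "\<And>x y. 0 \<le> x \<Longrightarrow> x < y \<Longrightarrow> f x < f y"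
  proof -
    fix x y :: real assume "0 \<le> x" "x < y"
    hence "f x \<le> f y" using m by (auto simp: mono_on_def)
    moreover have "f x \<noteq> f y" using b \<open>0 \<le> x\<close> \<open>x<y\<close> unfolding bij_betw_def inj_on_def
      by (metis atLeast_iff less_eq_real_def order.trans less_irrefl)
    ultimately show "f x < f y" by simp
  qed
  show "\<And>y. 0 \<le> y \<Longrightarrow> \<exists>x\<ge>0. f x = y" using b by (force simp: bij_betw_def)
qed

lemma inc_bijI:
  assumes "\<And>x. 0 \<le> x \<Longrightarrow> f x \<ge> 0"
    and "\<And>x y. 0 \<le> x \<Longrightarrow> x < y \<Longrightarrow> f x < f y"
    and "\<And>y. 0 \<le> y \<Longrightarrow> \<exists>x\<ge>0. f x = y"
  shows "inc_bij f"
proof -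
  have "mono_on {0..} f" using assms(2) by (force simp: mono_on_def less_eq_real_def)
  moreover have "inj_on f {0..}"
  proof (rule inj_onI)
    fix x y :: real assume "x \<in> {0..}" "y \<in> {0..}" "f x = f y"
    thus "x = y" using assms(2)[of x y] assms(2)[of y x] by (cases "x < y"; cases "y < x") auto
  qed
  moreover have "f ` {0..} = {0..}"
    using assms(1,3) by (auto simp: image_iff)
  ultimately show ?thesis by (auto simp: inc_bij_def bij_betw_def)
qed

lemma inc_bij_le_iff:
  assumes "inc_bij f" "0 \<le> x" "0 \<le> y"
  shows "f x \<le> f y \<longleftrightarrow> x \<le> y"
  using inc_bijD(2)[OF assms(1), of x y] inc_bijD(2)[OF assms(1), of y x] assms
  by (cases "x < y"; cases "y < x") auto

lemma inc_bij_min: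
  assumes f: "inc_bij f" and g: "inc_bij g"
  shows "inc_bij (\<lambda>x. min (f x) (g x))"
proof (rule inc_bijI)
  show "\<And>x. 0 \<le> x \<Longrightarrow> min (f x) (g x) \<ge> 0" using inc_bijD(1)[OF f] inc_bijD(1)[OF g] by simp
  show "\<And>x y. 0 \<le> x \<Longrightarrow> x < y \<Longrightarrow> min (f x) (g x) < min (f y) (g y)"
    using inc_bijD(2)[OF f] inc_bijD(2)[OF g] by (smt (verit))
  fix y :: real assume y: "0 \<le> y"
  obtain x1 where x1: "x1 \<ge> 0" "f x1 = y" using inc_bijD(3)[OF f y] by blast
  obtain x2 where x2: "x2 \<ge> 0" "g x2 = y" using inc_bijD(3)[OF g y] by blast
  show "\<exists>x\<ge>0. min (f x) (g x) = y"
  proof (cases "x1 \<le> x2")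
    case True
    hence "f x2 \<ge> y" using inc_bij_le_iff[OF f x1(1) x2(1)] x1 by simp
    thus ?thesis using x2 by (intro exI[of _ x2]) auto
  next
    case False
    hence "g x1 \<ge> y" using inc_bij_le_iff[OF g x2(1) x1(1)] x2 by simp
    thus ?thesis using x1 by (intro exI[of _ x1]) auto
  qed
qed

lemma inc_bij_comp:
  assumes f: "inc_bij f" and g: "inc_bij g"
  shows "inc_bij (\<lambda>x. f (g x))"
proof (rule inc_bijI)
  show "\<And>x. 0 \<le> x \<Longrightarrow> f (g x) \<ge> 0" using inc_bijD(1)[OF f] inc_bijD(1)[OF g] by simp
  show "\<And>x y. 0 \<le> x \<Longrightarrow> x < y \<Longrightarrow> f (g x) < f (g y)"
    using inc_bijD(1,2)[OF f] inc_bijD(1,2)[OF g] by simp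
  fix y :: real assume y: "0 \<le> y"
  obtain x1 where x1: "x1 \<ge> 0" "f x1 = y" using inc_bijD(3)[OF f y] by blast
  obtain x2 where x2: "x2 \<ge> 0" "g x2 = x1" using inc_bijD(3)[OF g x1(1)] by blast
  show "\<exists>x\<ge>0. f (g x) = y" using x1 x2 by blast
qed

lemma inc_bij_sqrt: "inc_bij sqrt"
proof (rule inc_bijI)
  fix y :: real assume "0 \<le> y" thus "\<exists>x\<ge>0. sqrt x = y" by (intro exI[of _ "y^2"]) auto
qed auto

lemma inc_bij_half: "inc_bij (\<lambda>x. x / 2)"
  by (rule inc_bijI) (auto intro!: exI[of _ "2*_"])

lemma ginv_eq:
  assumes f: "inc_bij f" and y: "0 \<le> y"
  shows "ginv f y \<ge> 0 \<and> f (ginv f y) = y"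
proof -
  obtain x where x: "x \<ge> 0" "f x = y" using inc_bijD(3)[OF f y] by blast
  have "ginv f y = x" unfolding ginv_def
  proof (rule Least_equality)
    show "0 \<le> x \<and> y \<le> f x" using x by simp
    fix w assume "0 \<le> w \<and> y \<le> f w"
    thus "x \<le> w" using inc_bijD(2)[OF f, of w x] x by force
  qed
  thus ?thesis using x by simp
qed


definition psi :: "(real \<Rightarrow> real) \<Rightarrow> real \<Rightarrow> real" where
  "psi f x = min (sqrt x / 2) (min (f (sqrt x) / 2) (f x))"

lemma P_facts:
  assumes f: "inc_bij f" and y: "0 \<le> y"
  shows "inv_into {0..} f y \<ge> 0 \<and> f (inv_into {0..} f y) = y"
proof -
  have b: "bij_betw f {0..} {0..}" using f by (simp add: inc_bij_def)
  have "y \<in> f ` {0..}" using b y by (simp add: bij_betw_def)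
  thus ?thesis using b y by (metis atLeast_iff f_inv_into_f inv_into_into)
qed

lemma P_mono:
  assumes f: "inc_bij f" and "0 \<le> y1" "y1 \<le> y2"
  shows "inv_into {0..} f y1 \<le> inv_into {0..} f y2"
  using P_facts[OF f, of y1] P_facts[OF f, of y2] assms inc_bij_le_iff[OF f] by force

lemma psi_inc_bij:
  assumes f: "inc_bij f" shows "inc_bij (psi f)"
proof -
  have a: "inc_bij (\<lambda>x. sqrt x / 2)" using inc_bij_comp[OF inc_bij_half inc_bij_sqrt] .
  have b: "inc_bij (\<lambda>x. f (sqrt x) / 2)"
    using inc_bij_comp[OF inc_bij_half inc_bij_comp[OF f inc_bij_sqrt]] .
  show ?thesis unfolding psi_def by (intro inc_bij_min a b f)
qed

lemma psi_le: "psi f x \<le> f x" "0 \<le> x \<Longrightarrow> psi f x \<le> sqrt x"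
  unfolding psi_def by (auto simp: min_le_iff_disj)

lemma G_bounds:
  assumes f: "inc_bij f" and k: "0 \<le> k"
  defines "P \<equiv> inv_into {0..} f"
  shows "ginv (psi f) k \<ge> 4*k^2" "ginv (psi f) k \<ge> (P (2*k))^2"
    "ginv (psi f) k \<le> max (4*k^2) (max ((P (2*k))^2) (P k))"
proof -
  define x where "x = ginv (psi f) k"
  have x: "x \<ge> 0" "psi f x = k" using ginv_eq[OF psi_inc_bij[OF f] k] by (auto simp: x_def)
  have "sqrt x / 2 \<ge> k" using x by (simp add: psi_def)
  hence "sqrt x \<ge> 2*k" by simp
  hence "(sqrt x)^2 \<ge> (2*k)^2" using k by (intro power_mono) auto
  thus "ginv (psi f) k \<ge> 4*k^2" using x by (simp add: x_def power_mult_distrib)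
  have "f (sqrt x) / 2 \<ge> k" using x by (simp add: psi_def)
  hence "f (sqrt x) \<ge> f (P (2*k))" using P_facts[OF f, of "2*k"] k by (simp add: P_def)
  hence "sqrt x \<ge> P (2*k)" using inc_bij_le_iff[OF f, of "P (2*k)" "sqrt x"] P_facts[OF f, of "2*k"] k x
    by (simp add: P_def)
  hence "(sqrt x)^2 \<ge> (P (2*k))^2" using P_facts[OF f, of "2*k"] k by (intro power_mono) (auto simp: P_def)
  thus "ginv (psi f) k \<ge> (P (2*k))^2" using x by (simp add: x_def)
  define x1 where "x1 = max (4*k^2) (max ((P (2*k))^2) (P k))"
  have Pk: "P k \<ge> 0" "f (P k) = k" using P_facts[OF f k] by (auto simp: P_def)
  have P2k: "P (2*k) \<ge> 0" "f (P (2*k)) = 2*k" using P_facts[OF f, of "2*k"] k by (auto simp: P_def)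
  have x10: "x1 \<ge> 0" unfolding x1_def by (simp add: le_max_iff_disj)
  have "sqrt x1 \<ge> sqrt (4*k^2)" by (rule real_sqrt_le_mono) (simp add: x1_def)
  hence s1: "sqrt x1 / 2 \<ge> k" using k by (simp add: real_sqrt_mult)
  have "sqrt x1 \<ge> sqrt ((P (2*k))^2)" by (rule real_sqrt_le_mono) (simp add: x1_def)
  hence "sqrt x1 \<ge> P (2*k)" using P2k by simp
  hence "f (sqrt x1) \<ge> f (P (2*k))" using inc_bij_le_iff[OF f, of "P (2*k)" "sqrt x1"] P2k x10 by simp
  hence s2: "f (sqrt x1) / 2 \<ge> k" using P2k by simp
  have "x1 \<ge> P k" by (simp add: x1_def)
  hence "f x1 \<ge> k" using inc_bij_le_iff[OF f, of "P k" x1] Pk x10 by simp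
  hence "psi f x1 \<ge> psi f x" using s1 s2 x by (simp add: psi_def)
  hence "x \<le> x1" using inc_bij_le_iff[OF psi_inc_bij[OF f] x(1) x10] by simp
  thus "ginv (psi f) k \<le> max (4*k^2) (max ((P (2*k))^2) (P k))" by (simp add: x_def x1_def)
qed

lemma G_mono:
  assumes f: "inc_bij f" and "0 \<le> y1" "y1 \<le> y2"
  shows "ginv (psi f) y1 \<le> ginv (psi f) y2"
  using ginv_eq[OF psi_inc_bij[OF f], of y1] ginv_eq[OF psi_inc_bij[OF f], of y2] assms
    inc_bij_le_iff[OF psi_inc_bij[OF f]] by force


lemma nonsummable_unbounded:
  fixes x :: "nat \<Rightarrow> real"
  assumes "\<And>n. 0 \<le> x n" "\<not> summable x"
  shows "\<exists>N. (\<Sum>i<N. x i) > B"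
  using summableI_nonneg_bounded[of x B] assms by (meson not_less)

lemma sum_mono_nat:
  fixes x :: "nat \<Rightarrow> real"
  assumes "\<And>n. 0 \<le> x n" "m \<le> n"
  shows "(\<Sum>i<m. x i) \<le> (\<Sum>i<n. x i)"
  using assms by (intro sum_mono2) auto

lemma gap_lemma:
  fixes H :: "nat \<Rightarrow> real"
  assumes H1: "\<And>n. H n \<ge> 1" and Hm: "\<And>m n. m \<le> n \<Longrightarrow> H m \<le> H n"
    and ns: "\<not> summable (\<lambda>n. 1 / H n)"
  shows "\<exists>a. strict_mono a \<and> filterlim (\<lambda>k. real (a (Suc k)) - real (a k)) at_top sequentially
     \<and> \<not> summable (\<lambda>k. 1 / H (a (Suc k)))"
proof -
  define S where "S N = (\<Sum>n<N. 1 / H n)" for N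
  have nn: "0 \<le> 1 / H n" for n using H1[of n] by simp
  have Sunb: "\<exists>N. S N > B" for B using nonsummable_unbounded[OF nn ns] by (simp add: S_def)
  have Smono: "m \<le> n \<Longrightarrow> S m \<le> S n" for m n unfolding S_def by (rule sum_mono_nat[OF nn])
  have S0: "S n \<ge> 0" for n unfolding S_def by (intro sum_nonneg nn)
  define \<gamma> where "\<gamma> n = nat \<lfloor>sqrt (S n)\<rfloor> + 1" for n
  define a where "a = rec_nat 0 (\<lambda>k ak. ak + \<gamma> ak)"
  have a0: "a 0 = 0" and aS: "a (Suc k) = a k + \<gamma> (a k)" for k by (simp_all add: a_def)
  have sm: "strict_mono a" unfolding strict_mono_Suc_iff using aS by (simp add: \<gamma>_def)
  have ak: "k \<le> a k" for k using sm by (simp add: strict_mono_imp_increasing)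
  have gam_ge: "real (\<gamma> n) \<ge> sqrt (S n)" for n
    unfolding \<gamma>_def using S0[of n] by (simp add: of_nat_nat) linarith
  have gam_le: "real (\<gamma> n) \<le> sqrt (S n) + 1" for n
    unfolding \<gamma>_def using S0[of n] by (simp add: of_nat_nat)
  have lim: "filterlim (\<lambda>k. real (a (Suc k)) - real (a k)) at_top sequentially"
    unfolding filterlim_at_top
  proof (intro allI)
    fix Z :: real
    obtain N where N: "S N > Z^2" using Sunb by blast
    show "eventually (\<lambda>k. real (a (Suc k)) - real (a k) \<ge> Z) sequentially"
      unfolding eventually_sequentially
    proof (intro exI allI impI)
      fix k assume "N \<le> k"
      hence "S (a k) \<ge> S N" using ak Smono by (meson le_trans)
      hence "S (a k) > Z^2" using N by simp
      hence "sqrt (S (a k)) > sqrt (Z^2)" by (simp only: real_sqrt_less_iff)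
      hence "sqrt (S (a k)) \<ge> Z" by simp
      thus "real (a (Suc k)) - real (a k) \<ge> Z" using gam_ge[of "a k"] aS[of k] by simp
    qed
  qed
  have step: "1 / H (a k) \<ge> sqrt (S (a (Suc k)) + 1) - sqrt (S (a k) + 1)" for k
  proof -
    define s where "s = S (a k)"
    define g where "g = \<gamma> (a k)"
    define \<Delta> where "\<Delta> = S (a (Suc k)) - s"
    have g1: "g \<ge> 1" by (simp add: g_def \<gamma>_def)
    have "\<Delta> = (\<Sum>n\<in>{a k..<a k + g}. 1 / H n)"
      unfolding \<Delta>_def s_def S_def aS g_def by (simp add: sum.atLeastLessThan_concat[symmetric] lessThan_atLeast0 sum_diff_nat_ivl)
    also have "\<dots> \<le> (\<Sum>n\<in>{a k..<a k + g}. 1 / H (a k))"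
    proof (intro sum_mono)
      fix n assume "n \<in> {a k..<a k + g}"
      hence "H (a k) \<le> H n" using Hm by simp
      moreover have "H (a k) > 0" using H1[of "a k"] by simp
      ultimately show "1 / H n \<le> 1 / H (a k)" by (simp add: frac_le)
    qed
    also have "\<dots> = real g / H (a k)" by simp
    finally have D1: "\<Delta> \<le> real g / H (a k)" .
    have D0: "\<Delta> \<ge> 0" unfolding \<Delta>_def s_def using Smono[of "a k" "a (Suc k)"] aS by simp
    define u where "u = sqrt (s + 1)"
    define v where "v = sqrt (s + \<Delta> + 1)"
    have s0: "s \<ge> 0" by (simp add: s_def S0)
    have u1: "u \<ge> 1" unfolding u_def using s0 by simp
    have vu: "v \<ge> u" unfolding u_def v_def using D0 by simp
    have uv2: "v^2 - u^2 = \<Delta>" unfolding u_def v_def using s0 D0 by simp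
    have "(v - u) * (2*u) \<le> (v - u) * (v + u)" using vu by (intro mult_left_mono) auto
    also have "\<dots> = \<Delta>" using uv2 by (simp add: power2_eq_square algebra_simps)
    finally have E1: "(v - u) * (2*u) \<le> \<Delta>" .
    have "real g \<le> sqrt s + 1" using gam_le by (simp add: g_def s_def)
    also have "\<dots> \<le> 2 * u"
    proof -
      have "sqrt s \<le> u" unfolding u_def by simp
      thus ?thesis using u1 by simp
    qed
    finally have gu: "real g \<le> 2*u" .
    have "(v - u) * real g \<le> (v - u) * (2*u)" using gu vu by (intro mult_left_mono) auto
    with E1 have "(v - u) * real g \<le> real g / H (a k)" using D1 by linarith
    hence "(v - u) * real g \<le> (1 / H (a k)) * real g" by simp
    moreover have "real g > 0" using g1 by simp
    ultimately have "v - u \<le> 1 / H (a k)" by (meson mult_right_le_imp_le)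
    thus ?thesis unfolding u_def v_def \<Delta>_def s_def by simp
  qed
  have "\<not> summable (\<lambda>k. 1 / H (a k))"
  proof
    assume sm2: "summable (\<lambda>k. 1 / H (a k))"
    define B where "B = suminf (\<lambda>k. 1 / H (a k))"
    have "(\<Sum>k<K. 1 / H (a k)) \<le> B" for K
      unfolding B_def by (rule sum_le_suminf[OF sm2]) (auto intro: nn order.trans[OF zero_le_one H1])
    moreover have "(\<Sum>k<K. 1 / H (a k)) \<ge> sqrt (S (a K) + 1) - 1" for K
    proof -
      have "(\<Sum>k<K. 1 / H (a k)) \<ge> (\<Sum>k<K. sqrt (S (a (Suc k)) + 1) - sqrt (S (a k) + 1))"
        by (intro sum_mono step)
      also have "(\<Sum>k<K. sqrt (S (a (Suc k)) + 1) - sqrt (S (a k) + 1)) = sqrt (S (a K) + 1) - sqrt (S (a 0) + 1)"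
        by (rule sum_lessThan_telescope)
      finally show ?thesis by (simp add: a0 S_def)
    qed
    ultimately have bd: "sqrt (S (a K) + 1) \<le> B + 1" for K by (smt (verit))
    obtain N where N: "S N > (B+1)^2" using Sunb by blast
    have "S N \<le> S (a N)" using ak Smono by blast
    hence "sqrt (S N + 1) \<le> B + 1" using bd[of N] by (smt (verit) real_sqrt_le_mono)
    hence "S N + 1 \<le> (B+1)^2" using S0[of N] by (smt (verit) real_le_lsqrt real_sqrt_ge_zero real_sqrt_le_iff sqrt_le_D)
    thus False using N by simp
  qed
  hence "\<not> summable (\<lambda>k. 1 / H (a (Suc k)))" using summable_Suc_iff[of "\<lambda>k. 1 / H (a k)"] by simp
  thus ?thesis using sm lim by blast
qed


lemma pair_lemma:
  fixes F :: "nat \<Rightarrow> real"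
  assumes F0: "\<And>n. F n > 0" and Fm: "\<And>m n. m \<le> n \<Longrightarrow> F m \<le> F n"
    and ns: "\<not> summable (\<lambda>k. 1 / F (Suc k))"
  shows "\<not> summable (\<lambda>n. 1 / F (2*n+1))"
proof
  assume sm: "summable (\<lambda>n. 1 / F (2*n+1))"
  define B where "B = suminf (\<lambda>n. 1 / F (2*n+1))"
  have nn: "0 \<le> 1 / F n" for n using F0[of n] by simp
  have pb: "(\<Sum>n<N. 1 / F (2*n+1)) \<le> B" for N
    unfolding B_def by (rule sum_le_suminf[OF sm]) (auto intro: nn less_imp_le[OF F0])
  have pair: "(\<Sum>k<2*N. 1 / F (Suc k)) \<le> 2 * (\<Sum>n<N. 1 / F (2*n+1))" for N
  proof (induction N)
    case 0 then show ?case by simp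
  next
    case (Suc N)
    have "1 / F (Suc (Suc (2*N))) \<le> 1 / F (2*N+1)"
      using F0 Fm[of "2*N+1" "Suc (Suc (2*N))"] by (simp add: frac_le)
    then show ?case using Suc by (simp add: mult_2 [symmetric])
  qed
  have "summable (\<lambda>k. 1 / F (Suc k))"
  proof (rule summableI_nonneg_bounded[where x="2*B"])
    show "0 \<le> 1 / F (Suc n)" for n by (rule nn)
    fix K
    have "(\<Sum>k<K. 1 / F (Suc k)) \<le> (\<Sum>k<2*K. 1 / F (Suc k))"
      by (rule sum_mono_nat) (use nn in auto)
    also have "\<dots> \<le> 2 * B" using pair[of K] pb[of K] by linarith
    finally show "(\<Sum>k<K. 1 / F (Suc k)) \<le> 2 * B" .
  qed
  thus False using ns by simp
qed

lemma log_sqrt_bound: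
  fixes x :: real assumes "x \<ge> 1"
  shows "x / (1 + ln x) \<ge> sqrt x / 2"
proof -
  have sx: "sqrt x \<ge> 1" using assms by simp
  have "ln (sqrt x) \<le> sqrt x - 1" using sx by (intro ln_le_minus_one) simp
  moreover have "ln (sqrt x) = ln x / 2" using assms by (simp add: ln_sqrt)
  ultimately have l: "1 + ln x \<le> 2 * sqrt x" by simp
  have lp: "1 + ln x > 0" using assms by (smt (verit) ln_ge_zero)
  have "sqrt x / 2 * (1 + ln x) \<le> sqrt x / 2 * (2 * sqrt x)" using l sx by (intro mult_left_mono) auto
  also have "\<dots> = x" using assms by simp
  finally show ?thesis using lp by (simp add: pos_le_divide_eq)
qed

lemma min_lemma:
  fixes h :: "nat \<Rightarrow> real"
  assumes h1: "\<And>n. h n \<ge> 1" and hm: "\<And>m n. m \<le> n \<Longrightarrow> h m \<le> h n"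
    and ns: "\<not> summable (\<lambda>n. 1 / h n)"
  shows "\<not> summable (\<lambda>n. 1 / max (1 + ln (real n + 1)) (h n))"
proof
  define LL where "LL n = 1 + ln (real n + 1)" for n
  assume sm: "summable (\<lambda>n. 1 / max (1 + ln (real n + 1)) (h n))"
  define B where "B = suminf (\<lambda>n. 1 / max (1 + ln (real n + 1)) (h n))"
  have l1: "LL n \<ge> 1" for n by (simp add: LL_def)
  have lm: "m \<le> n \<Longrightarrow> LL m \<le> LL n" for m n by (simp add: LL_def)
  have nn: "0 \<le> 1 / max (1 + ln (real n + 1)) (h n)" for n using h1[of n] by simp
  have pb: "(\<Sum>n<N. 1 / max (1 + ln (real n + 1)) (h n)) \<le> B" for N
    unfolding B_def by (rule sum_le_suminf[OF sm]) (use nn in blast)+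
  show False
  proof (cases "\<exists>N. \<forall>n\<ge>N. h n \<ge> LL n")
    case True
    then obtain N where N: "\<forall>n\<ge>N. h n \<ge> LL n" by blast
    have "eventually (\<lambda>n. 1 / max (1 + ln (real n + 1)) (h n) = 1 / h n) sequentially"
      unfolding eventually_sequentially using N by (auto simp: LL_def max_def)
    hence "summable (\<lambda>n. 1 / h n)" using sm summable_cong by fastforce
    thus False using ns by simp
  next
    case False
    obtain M :: nat where M: "real M > 4 * B^2" using reals_Archimedean2 by blast
    obtain n where n: "n \<ge> M" "h n < LL n" using False by (meson not_le)
    have "(\<Sum>j<Suc n. 1 / LL n) \<le> (\<Sum>j<Suc n. 1 / max (1 + ln (real j + 1)) (h j))"
    proof (intro sum_mono)
      fix j assume "j \<in> {..<Suc n}"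
      hence "j \<le> n" by simp
      hence "max (1 + ln (real j + 1)) (h j) \<le> LL n" using lm[of j n] hm[of j n] n(2) by (simp add: LL_def)
      moreover have "max (1 + ln (real j + 1)) (h j) > 0" using h1[of j] by simp
      ultimately show "1 / LL n \<le> 1 / max (1 + ln (real j + 1)) (h j)" by (simp add: frac_le)
    qed
    also have "\<dots> \<le> B" by (rule pb)
    finally have "(real n + 1) / LL n \<le> B" by (simp add: add.commute)
    moreover have "(real n + 1) / LL n \<ge> sqrt (real n + 1) / 2"
      using log_sqrt_bound[of "real n + 1"] by (simp add: LL_def)
    ultimately have "sqrt (real n + 1) \<le> 2 * B" by linarith
    hence "real n + 1 \<le> (2*B)^2" by (smt (verit) real_sqrt_le_iff real_sqrt_pow2 real_sqrt_ge_zero power_mono sqrt_le_D)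
    moreover have "real n \<ge> real M" using n by simp
    ultimately show False using M by (simp add: power_mult_distrib)
  qed
qed


lemma maxln_mono:
  fixes x y :: real assumes "0 \<le> x" "x \<le> y"
  shows "max 1 (ln x) \<le> max 1 (ln y)"
proof (cases "x = 0")
  case True thus ?thesis by simp
next
  case False
  hence "ln x \<le> ln y" using assms by simp
  thus ?thesis by simp
qed

lemma divergence_part:
  fixes \<phi> :: "real \<Rightarrow> real"
  assumes f: "inc_bij \<phi>"
    and ns: "\<not> summable (\<lambda>k. 1 / max 1 (ln (inv_into {0..} \<phi> (real (Suc k)))))"
  shows "\<not> summable (\<lambda>n. 1 / max 1 (ln (ginv (psi \<phi>) (real n))))"
proof -
  define P where "P = inv_into {0..} \<phi>"
  define F where "F m = max 1 (ln (P (real m)))" for m :: nat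
  have Pf: "y \<ge> 0 \<Longrightarrow> P y \<ge> 0" for y using P_facts[OF f] by (simp add: P_def)
  have Pm: "0 \<le> y1 \<Longrightarrow> y1 \<le> y2 \<Longrightarrow> P y1 \<le> P y2" for y1 y2 using P_mono[OF f] by (simp add: P_def)
  have F1: "F n \<ge> 1" for n by (simp add: F_def)
  have Fm: "m \<le> n \<Longrightarrow> F m \<le> F n" for m n
    unfolding F_def by (rule maxln_mono) (auto intro: Pf Pm)
  have ns2: "\<not> summable (\<lambda>n. 1 / F (2*n+1))"
    by (rule pair_lemma) (use F1 Fm ns in \<open>auto simp: F_def P_def intro: less_le_trans[OF zero_less_one]\<close>)
  have ns3: "\<not> summable (\<lambda>n. 1 / max (1 + ln (real n + 1)) (F (2*n+1)))"
    by (rule min_lemma) (use F1 Fm ns2 in auto)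
  define H where "H n = max 1 (ln (ginv (psi \<phi>) (real n)))" for n :: nat
  have Hb: "H n \<le> 4 * max (1 + ln (real n + 1)) (F (2*n+1))" for n
  proof -
    define G where "G = ginv (psi \<phi>) (real n)"
    define Q where "Q = max 1 (P (real (2*n+1)))"
    have Q1: "Q \<ge> 1" by (simp add: Q_def)
    have G0: "G \<ge> 0" using ginv_eq[OF psi_inc_bij[OF f], of "real n"] by (simp add: G_def)
    have Gb: "G \<le> max (4*(real n)^2) (max ((P (2*real n))^2) (P (real n)))"
      using G_bounds(3)[OF f, of "real n"] by (simp add: G_def P_def)
    have n1: "(real n + 1)^2 \<ge> 1" by simp
    have Q2: "Q^2 \<ge> 1" using Q1 by simp
    have "4*(real n)^2 \<le> 4*(real n + 1)^2 * 1" by (simp add: power_mono)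
    also have "\<dots> \<le> 4*(real n + 1)^2 * Q^2" using Q2 by (intro mult_left_mono) auto
    finally have b1: "4*(real n)^2 \<le> 4*(real n + 1)^2 * Q^2" .
    have p2: "P (2*real n) \<le> Q" using Pm[of "2*real n" "real (2*n+1)"] by (simp add: Q_def)
    have p2': "P (2*real n) \<ge> 0" using Pf by simp
    have "(P (2*real n))^2 \<le> Q^2" using p2 p2' by (intro power_mono) auto
    also have "\<dots> = 1 * Q^2" by simp
    also have "\<dots> \<le> 4*(real n + 1)^2 * Q^2" using n1 by (intro mult_right_mono) (linarith, simp)
    finally have b2: "(P (2*real n))^2 \<le> 4*(real n + 1)^2 * Q^2" .
    have "P (real n) \<le> Q" using Pm[of "real n" "real (2*n+1)"] by (simp add: Q_def)
    also have "Q \<le> Q^2" using Q1 by (simp add: power2_eq_square)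
    also have "Q^2 = 1 * Q^2" by simp
    also have "\<dots> \<le> 4*(real n + 1)^2 * Q^2" using n1 by (intro mult_right_mono) (linarith, simp)
    finally have b3: "P (real n) \<le> 4*(real n + 1)^2 * Q^2" .
    have GX: "G \<le> 4*(real n + 1)^2 * Q^2" using Gb b1 b2 b3 by linarith
    have "H n \<le> max 1 (ln (4*(real n + 1)^2 * Q^2))"
      unfolding H_def G_def[symmetric] by (rule maxln_mono[OF G0 GX])
    also have "ln (4*(real n + 1)^2 * Q^2) = ln 4 + 2 * ln (real n + 1) + 2 * ln Q"
      using Q1 by (simp add: ln_mult ln_realpow)
    also have "ln 4 \<le> (2::real)"
    proof -
      have "ln (4::real) = ln (2^2)" by simp
      also have "\<dots> = 2 * ln 2" by (simp only: ln_realpow)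
      also have "\<dots> \<le> 2 * (2 - 1)" using ln_le_minus_one[of 2] by simp
      finally show ?thesis by simp
    qed
    hence "max 1 (ln 4 + 2 * ln (real n + 1) + 2 * ln Q) \<le> max 1 (2 + 2 * ln (real n + 1) + 2 * ln Q)"
      by simp
    also have "ln Q \<le> F (2*n+1)"
    proof (cases "P (real (2*n+1)) \<le> 1")
      case True thus ?thesis using F1[of "2*n+1"] by (simp add: Q_def)
    next
      case False thus ?thesis by (simp add: Q_def F_def)
    qed
    hence "max 1 (2 + 2 * ln (real n + 1) + 2 * ln Q) \<le> 4 * max (1 + ln (real n + 1)) (F (2*n+1))"
      using F1[of "2*n+1"] by (simp add: max_def)
    finally show ?thesis .
  qed
  show ?thesis
  proof
    assume sm: "summable (\<lambda>n. 1 / max 1 (ln (ginv (psi \<phi>) (real n))))"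
    hence "summable (\<lambda>n. 4 * (1 / H n))" unfolding H_def by (rule summable_mult)
    moreover have "norm (1 / max (1 + ln (real n + 1)) (F (2*n+1))) \<le> 4 * (1 / H n)" for n
    proof -
      have H1: "H n \<ge> 1" by (simp add: H_def)
      have M1: "max (1 + ln (real n + 1)) (F (2*n+1)) \<ge> 1" using F1[of "2*n+1"] by simp
      have "1 / max (1 + ln (real n + 1)) (F (2*n+1)) \<le> 4 / H n"
        using Hb[of n] H1 M1 by (simp add: field_simps)
      thus ?thesis using M1 by simp
    qed
    ultimately have "summable (\<lambda>n. 1 / max (1 + ln (real n + 1)) (F (2*n+1)))"
      by (rule summable_comparison_test'[where N=0])
    thus False using ns3 by simp
  qed
qed


lemma quad_bound:
  fixes k p :: real assumes "k \<ge> 0" "p \<ge> 0"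
  shows "(k + p) * k \<le> max (4*k^2) (p^2)"
proof (cases "p \<le> 3*k")
  case True
  hence "(k + p) * k \<le> (4*k) * k" using assms by (intro mult_right_mono) auto
  thus ?thesis by (simp add: power2_eq_square le_max_iff_disj)
next
  case False
  hence "(k + p) * k \<le> (p/3 + p) * (p/3)" using assms by (intro mult_mono) auto
  also have "\<dots> \<le> p^2" using assms by (simp add: power2_eq_square field_simps)
  finally show ?thesis by (simp add: le_max_iff_disj)
qed

lemma good_at:
  fixes \<phi> :: "real \<Rightarrow> real" and z :: "nat \<Rightarrow> real"
  assumes f: "inc_bij \<phi>" and zpos: "\<And>n. z n > 0"
    and bd: "\<And>n. n \<ge> n0 \<Longrightarrow> z n \<le> C * exp (- \<phi> (real n))" and C1: "C \<ge> 1"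
    and r1: "real k \<ge> 2 * ln (1 / z 0) + 1" and r2: "real k \<ge> 1 + ln C"
    and r3: "k \<ge> n0 + 3"
  shows "good (psi \<phi>) z k"
proof -
  define P where "P = inv_into {0..} \<phi>"
  have Pf: "y \<ge> 0 \<Longrightarrow> P y \<ge> 0 \<and> \<phi> (P y) = y" for y using P_facts[OF f] by (simp add: P_def)
  have Pm: "0 \<le> y1 \<Longrightarrow> y1 \<le> y2 \<Longrightarrow> P y1 \<le> P y2" for y1 y2 using P_mono[OF f] by (simp add: P_def)
  have lnC: "ln C \<ge> 0" using C1 by simp
  define c where "c = real k + 1 + ln C"
  have c0: "c \<ge> 0" using lnC by (simp add: c_def)
  have c2: "c \<le> 2 * real k" using r2 by (simp add: c_def)
  define M where "M = n0 + nat \<lceil>P c\<rceil>"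
  define lo where "lo = exp (- real k - 1)"
  define hi where "hi = exp (- real k)"
  have zs_le: "zstar z m \<le> z m" for m unfolding zstar_def by (rule Min_le) auto
  have big: "zstar z m < lo" if "m > M" for m
  proof -
    have "m \<ge> n0" using that by (simp add: M_def)
    have "real m > P c" using that by (simp add: M_def) linarith
    hence "\<phi> (real m) > \<phi> (P c)" using inc_bijD(2)[OF f, of "P c" "real m"] Pf[OF c0] by simp
    hence "\<phi> (real m) > c" using Pf[OF c0] by simp
    hence "exp (- \<phi> (real m)) < exp (- c)" by simp
    hence "C * exp (- \<phi> (real m)) < C * exp (- c)" using C1 by simp
    also have "C * exp (- c) = lo" using C1 by (simp add: c_def lo_def exp_diff exp_add exp_minus field_simps)
    finally show ?thesis using zs_le[of m] bd[OF \<open>m \<ge> n0\<close>] by linarith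
  qed
  define A where "A = {zstar z m | m. m \<ge> 1} \<inter> {lo .. hi}"
  have AM: "A \<subseteq> zstar z ` {1..M}"
  proof
    fix x assume "x \<in> A"
    then obtain m where m: "m \<ge> 1" "x = zstar z m" "x \<ge> lo" by (auto simp: A_def)
    have "m \<le> M" using big[of m] m by force
    thus "x \<in> zstar z ` {1..M}" using m by auto
  qed
  have finA: "finite A" using AM finite_subset by blast
  have cardA: "card A \<le> M" using card_mono[OF _ AM] card_image_le[of "{1..M}" "zstar z"] by force
  define D where "D = A \<union> {hi, lo}"
  have DD: "Dset z k = D" by (simp add: Dset_def D_def A_def lo_def hi_def)
  have finD: "finite D" using finA by (simp add: D_def)
  have cardD: "card D \<le> M + 2"
  proof -
    have "card D \<le> card A + card {hi, lo}" unfolding D_def by (rule card_Un_le)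
    also have "card {hi, lo} \<le> 2" by (simp add: card_insert_le_m1)
    finally show ?thesis using cardA by linarith
  qed
  have lohi: "lo \<le> hi" by (simp add: lo_def hi_def)
  have rng: "x \<in> D \<Longrightarrow> lo \<le> x \<and> x \<le> hi" for x using lohi by (auto simp: D_def A_def)
  have lop: "lo > 0" by (simp add: lo_def)
  define N where "N = card D - 1"
  define d where "d = rev (sorted_list_of_set D)"
  have dl: "length d = Suc N" "\<forall>i<Suc N. d!i > 0" "d!0 = hi" "d!N = lo"
    using dlist_facts[OF finD _ _ lop rng] by (auto simp: D_def d_def N_def)
  have dd: "dlist z k = d" by (simp add: dlist_def DD d_def)
  have NN: "Nk z k = N" by (simp add: Nk_def DD N_def)
  define g where "g = ginv (psi \<phi>) (real k)"
  have g1: "g \<ge> 4 * (real k)^2" "g \<ge> (P (2 * real k))^2"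
    using G_bounds(1,2)[OF f, of "real k"] by (auto simp: g_def P_def)
  have k1: "real k \<ge> 3" using r3 by simp
  have gpos: "g > 0" using g1(1) k1 by (smt (verit) zero_less_power)
  define t where "t = exp (- (real k / (2 * g)))"
  have t0: "0 < t" and t1: "t \<le> 1" using gpos by (auto simp: t_def)
  have "real N \<le> real M + 1" using cardD by (simp add: N_def)
  also have "\<dots> \<le> real n0 + P c + 2" unfolding M_def using Pf[OF c0] by simp linarith
  also have "\<dots> \<le> real k + P (2 * real k)" using Pm[OF c0 c2] r3 by simp
  finally have Nb: "real N \<le> real k + P (2 * real k)" .
  have p0: "P (2 * real k) \<ge> 0" using Pf[of "2 * real k"] by simp
  have "real N * real k \<le> (real k + P (2 * real k)) * real k" using Nb by (intro mult_right_mono) auto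
  also have "\<dots> \<le> max (4 * (real k)^2) ((P (2 * real k))^2)" by (rule quad_bound) (use p0 in auto)
  also have "\<dots> \<le> g" using g1 by simp
  finally have Nkg: "real N * real k \<le> g" .
  have expo: "real N * (real k / (2 * g)) \<le> 1/2"
  proof -
    have "real N * (real k / (2 * g)) = (real N * real k) / (2 * g)" by simp
    also have "\<dots> \<le> g / (2 * g)" using Nkg gpos by (intro divide_right_mono) auto
    also have "\<dots> = 1/2" using gpos by simp
    finally show ?thesis .
  qed
  have core: "(\<Prod>i\<in>{i. i<N \<and> d!(i+1)/d!i \<le> t}. d!(i+1)/d!i) \<le> (d!N/d!0) / t^N"
    by (rule prod_core[OF dl(1,2) t0 t1])
  also have "(d!N/d!0) / t^N = exp (-1 + real N * (real k / (2 * g)))"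
  proof -
    have "d!N/d!0 = exp (-1)" using dl(3,4) by (simp add: lo_def hi_def flip: exp_diff)
    moreover have "t^N = exp (real N * (- (real k / (2 * g))))" unfolding t_def by (rule exp_of_nat_mult[symmetric])
    ultimately show ?thesis by (simp flip: exp_diff)
  qed
  also have "\<dots> \<le> exp (- 1 / 2)" using expo by simp
  finally have prodb: "(\<Prod>i\<in>{i. i<N \<and> d!(i+1)/d!i \<le> t}. d!(i+1)/d!i) \<le> exp (- 1 / 2)" .
  have kz: "int k \<ge> kzero z"
  proof -
    have "2 * ln (1 / z 0) \<le> real k" using r1 by simp
    hence "\<lceil>2 * ln (1 / z 0)\<rceil> \<le> \<lceil>real k\<rceil>" by (rule ceiling_mono)
    thus ?thesis by (simp add: kzero_def)
  qed
  show ?thesis unfolding good_def Let_def dd NN using kz prodb by (simp add: t_def g_def)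
qed


theorem lemma2p6:
  fixes \<phi> :: "real \<Rightarrow> real"
  assumes "inc_bij \<phi>"
    and "\<not> summable (\<lambda>k. 1 / max 1 (ln (inv_into {0..} \<phi> (real (Suc k)))))"
  shows "\<exists>\<psi> (a :: nat \<Rightarrow> nat).
     inc_bij \<psi> \<and> (\<forall>x\<ge>0. \<psi> x \<le> \<phi> x \<and> \<psi> x \<le> sqrt x) \<and>
     strict_mono a \<and>
     filterlim (\<lambda>k. real (a (Suc k)) - real (a k)) at_top sequentially \<and>
     \<not> summable (\<lambda>k. 1 / max 1 (ln (ginv \<psi> (real (a (Suc k)))))) \<and>
     (\<forall>z :: nat \<Rightarrow> real. (\<forall>n. z n > 0) \<and>
        limsup (\<lambda>n. ereal (exp (\<phi> (real n)) * z n)) < \<infinity> \<longrightarrow>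
        liminf (\<lambda>k. ereal (real (card {r \<in> {1..k}. good \<psi> z (a r)}) / real k)) \<ge> ereal (1/2))"
proof -
  note f = assms(1)
  define \<psi> where "\<psi> = psi \<phi>"
  define H where "H n = max 1 (ln (ginv \<psi> (real n)))" for n :: nat
  have H1: "H n \<ge> 1" for n by (simp add: H_def)
  have Hm: "H m \<le> H n" if "m \<le> n" for m n
  proof -
    have "ginv \<psi> (real m) \<ge> 0" using ginv_eq[OF psi_inc_bij[OF f], of "real m"] by (simp add: \<psi>_def)
    moreover have "ginv \<psi> (real m) \<le> ginv \<psi> (real n)" using G_mono[OF f, of "real m" "real n"] that
      by (simp add: \<psi>_def)
    ultimately show ?thesis unfolding H_def by (rule maxln_mono)
  qed
  have ns: "\<not> summable (\<lambda>n. 1 / H n)" using divergence_part[OF f assms(2)] by (simp add: H_def \<psi>_def)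
  obtain a where a: "strict_mono a" "filterlim (\<lambda>k. real (a (Suc k)) - real (a k)) at_top sequentially"
    "\<not> summable (\<lambda>k. 1 / H (a (Suc k)))" using gap_lemma[OF H1 Hm ns] by blast
  have ak: "r \<le> a r" for r using a(1) by (simp add: strict_mono_imp_increasing)
  have zpart: "liminf (\<lambda>k. ereal (real (card {r \<in> {1..k}. good \<psi> z (a r)}) / real k)) \<ge> ereal (1/2)"
    if zpos: "\<forall>n. z n > 0" and ls: "limsup (\<lambda>n. ereal (exp (\<phi> (real n)) * z n)) < \<infinity>" for z
  proof -
    obtain B where B: "limsup (\<lambda>n. ereal (exp (\<phi> (real n)) * z n)) < ereal B"
      using ereal_dense2[OF ls] by blast
    have "eventually (\<lambda>n. ereal (exp (\<phi> (real n)) * z n) < ereal B) sequentially"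
      by (rule Limsup_lessD[OF B])
    then obtain n0 where n0: "\<And>n. n \<ge> n0 \<Longrightarrow> exp (\<phi> (real n)) * z n < B"
      unfolding eventually_sequentially by auto
    define C where "C = max 1 B"
    have C1: "C \<ge> 1" by (simp add: C_def)
    have bd: "z n \<le> C * exp (- \<phi> (real n))" if "n \<ge> n0" for n
    proof -
      have "exp (\<phi> (real n)) * z n \<le> C" using n0[OF that] by (simp add: C_def)
      hence "z n \<le> C / exp (\<phi> (real n))" by (simp add: field_simps)
      thus ?thesis by (simp add: exp_minus field_simps)
    qed
    define K where "K = n0 + 3 + nat \<lceil>2 * ln (1 / z 0) + 1\<rceil> + nat \<lceil>1 + ln C\<rceil>"
    have goodK: "good \<psi> z k" if "k \<ge> K" for k
      unfolding \<psi>_def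
    proof (rule good_at[OF f _ bd C1])
      show "\<And>n. z n > 0" using zpos by blast
      show "real k \<ge> 2 * ln (1 / z 0) + 1" using that unfolding K_def by linarith
      show "real k \<ge> 1 + ln C" using that unfolding K_def by linarith
      show "k \<ge> n0 + 3" using that unfolding K_def by linarith
    qed
    have ev: "eventually (\<lambda>k. ereal (1/2) \<le> ereal (real (card {r \<in> {1..k}. good \<psi> z (a r)}) / real k)) sequentially"
      unfolding eventually_sequentially
    proof (intro exI allI impI)
      fix k assume k: "2 * K + 2 \<le> k"
      have sub: "{K+1..k} \<subseteq> {r \<in> {1..k}. good \<psi> z (a r)}"
      proof
        fix r assume r: "r \<in> {K+1..k}"
        hence "K \<le> a r" using ak[of r] by simp
        thus "r \<in> {r \<in> {1..k}. good \<psi> z (a r)}" using goodK r by simp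
      qed
      have "card {K+1..k} \<le> card {r \<in> {1..k}. good \<psi> z (a r)}"
        by (rule card_mono[OF _ sub]) simp
      hence c: "real k - real K \<le> real (card {r \<in> {1..k}. good \<psi> z (a r)})" using k by simp
      have kp: "real k > 0" using k by simp
      have "1/2 \<le> (real k - real K) / real k" using k kp by (simp add: field_simps)
      also have "\<dots> \<le> real (card {r \<in> {1..k}. good \<psi> z (a r)}) / real k"
        using c kp by (intro divide_right_mono) auto
      finally show "ereal (1/2) \<le> ereal (real (card {r \<in> {1..k}. good \<psi> z (a r)}) / real k)" by simp
    qed
    show ?thesis by (rule Liminf_bounded[OF ev])
  qed
  show ?thesis
  proof (intro exI conjI allI impI)
    show "inc_bij \<psi>" unfolding \<psi>_def by (rule psi_inc_bij[OF f])
    fix x :: real assume "x \<ge> 0"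
    thus "\<psi> x \<le> \<phi> x" "\<psi> x \<le> sqrt x" using psi_le by (auto simp: \<psi>_def)
  next
    show "strict_mono a" by (rule a(1))
    show "filterlim (\<lambda>k. real (a (Suc k)) - real (a k)) at_top sequentially" by (rule a(2))
    show "\<not> summable (\<lambda>k. 1 / max 1 (ln (ginv \<psi> (real (a (Suc k))))))" using a(3) by (simp add: H_def)
  next
    fix z :: "nat \<Rightarrow> real"
    assume "(\<forall>n. z n > 0) \<and> limsup (\<lambda>n. ereal (exp (\<phi> (real n)) * z n)) < \<infinity>"
    thus "liminf (\<lambda>k. ereal (real (card {r \<in> {1..k}. good \<psi> z (a r)}) / real k)) \<ge> ereal (1/2)"
      using zpart by blast
  qed
qed

end
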